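(* Let $K\ge2$, $0<q<p$ with $p+(K-1)q=1$, and $\phi\in\Delta$ with $\phi_1\le\cdots\le\phi_K$. If $\theta$ is an MLE for $\phi$, then there exists $n\in\{0,\dots,K-1\}$ such that $\theta=\theta^{[n]}$.
   Context: $\Delta=\{\theta\in\mathbb{R}^K:\theta_i\ge0,\sum_i\theta_i=1\}$. $\mathcal{M}(\theta)_y=q+(p-q)\theta_y$. $\theta\in\Delta$ is an MLE for $\phi$ if it minimizes $D_{KL}(\phi,\mathcal{M}(\theta))=\sum_i\phi_i\log(\phi_i/\mathcal{M}(\theta)_i)$ (convention $0\log(0/\cdot)=0$) over $\Delta$. For sorted $\phi$ and $n\in\{0,\dots,K-1\}$: $\lambda^{[n]}=\frac{(p-q)\sum_{i>n}\phi_i}{1-nq}$, and $\theta^{[n]}\in\mathbb{R}^K$ is given by $\theta^{[n]}_i=0$ for $i\le n$ and $\theta^{[n]}_i=\frac{\phi_i}{\lambda^{[n]}}-\frac{q}{p-q}$ for $i>n$. *)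

theory Defs
  imports Complex_Main
begin

text \<open>Vectors in R^K are represented as functions nat => real, indexed by 1..K.\<close>

definition simplex :: "nat \<Rightarrow> (nat \<Rightarrow> real) set" where
  "simplex K = {\<theta>. (\<forall>i\<in>{1..K}. \<theta> i \<ge> 0) \<and> (\<Sum>i=1..K. \<theta> i) = 1}"

definition model :: "real \<Rightarrow> real \<Rightarrow> (nat \<Rightarrow> real) \<Rightarrow> nat \<Rightarrow> real" where
  "model p q \<theta> y = q + (p - q) * \<theta> y"

definition KL :: "nat \<Rightarrow> (nat \<Rightarrow> real) \<Rightarrow> (nat \<Rightarrow> real) \<Rightarrow> real" where
  "KL K \<phi> \<mu> = (\<Sum>i=1..K. if \<phi> i = 0 then 0 else \<phi> i * ln (\<phi> i / \<mu> i))"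

definition is_MLE :: "nat \<Rightarrow> real \<Rightarrow> real \<Rightarrow> (nat \<Rightarrow> real) \<Rightarrow> (nat \<Rightarrow> real) \<Rightarrow> bool" where
  "is_MLE K p q \<phi> \<theta> \<longleftrightarrow> \<theta> \<in> simplex K \<and>
     (\<forall>\<theta>'\<in>simplex K. KL K \<phi> (model p q \<theta>) \<le> KL K \<phi> (model p q \<theta>'))"

definition lam :: "nat \<Rightarrow> real \<Rightarrow> real \<Rightarrow> (nat \<Rightarrow> real) \<Rightarrow> nat \<Rightarrow> real" where
  "lam K p q \<phi> n = (p - q) * (\<Sum>i\<in>{n<..K}. \<phi> i) / (1 - real n * q)"

definition theta_n :: "nat \<Rightarrow> real \<Rightarrow> real \<Rightarrow> (nat \<Rightarrow> real) \<Rightarrow> nat \<Rightarrow> nat \<Rightarrow> real" where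
  "theta_n K p q \<phi> n i = (if i \<le> n then 0 else \<phi> i / lam K p q \<phi> n - q / (p - q))"

end

theory Submission imports Defs begin

lemma perturb:
  fixes K :: nat and p q :: real and \<phi> \<theta> :: "nat \<Rightarrow> real"
  assumes q: "0 < q" and pq: "q < p"
    and phi: "\<phi> \<in> simplex K" and mle: "is_MLE K p q \<phi> \<theta>"
    and i: "i \<in> {1..K}" and j: "j \<in> {1..K}" and ij: "i \<noteq> j" and ti: "\<theta> i > 0"
  shows "\<phi> j / model p q \<theta> j \<le> \<phi> i / model p q \<theta> i"
proof -
  have th: "\<theta> \<in> simplex K" using mle by (simp add: is_MLE_def)
  have phinn: "\<forall>k\<in>{1..K}. \<phi> k \<ge> 0" using phi by (simp add: simplex_def)
  have thnn: "\<forall>k\<in>{1..K}. \<theta> k \<ge> 0" using th by (simp add: simplex_def)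
  have Mpos: "model p q x k > 0" if "x k \<ge> 0" for x k
    using that q pq unfolding model_def by (smt (verit) mult_nonneg_nonneg)
  define th' where "th' h = (\<lambda>k. \<theta> k + (if k = j then h else 0) - (if k = i then h else 0))" for h :: real
  define Mi where "Mi = model p q \<theta> i"
  define Mj where "Mj = model p q \<theta> j"
  have Mi: "Mi > 0" using Mpos ti unfolding Mi_def by simp
  have Mj: "Mj > 0" using Mpos thnn j unfolding Mj_def by simp
  define f where "f h = \<phi> i * ln (Mi - (p - q) * h) + \<phi> j * ln (Mj + (p - q) * h)" for h
  have key: "f h \<le> f 0" if h0: "0 < h" and h1: "h \<le> \<theta> i" for h
  proof -
    have nn: "\<forall>k\<in>{1..K}. th' h k \<ge> 0" using thnn h0 h1 ij unfolding th'_def by auto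
    have "(\<Sum>k=1..K. th' h k) = (\<Sum>k=1..K. \<theta> k) + (\<Sum>k=1..K. (if k = j then h else 0)) - (\<Sum>k=1..K. (if k = i then h else 0))"
      unfolding th'_def by (simp add: sum.distrib sum_subtractf)
    also have "\<dots> = 1" using i j th by (simp add: simplex_def)
    finally have "th' h \<in> simplex K" using nn by (simp add: simplex_def)
    then have le: "KL K \<phi> (model p q \<theta>) \<le> KL K \<phi> (model p q (th' h))" using mle by (simp add: is_MLE_def)
    have M'pos: "\<forall>k\<in>{1..K}. model p q (th' h) k > 0" using nn Mpos by blast
    have M0pos: "\<forall>k\<in>{1..K}. model p q \<theta> k > 0" using thnn Mpos by blast
    have "KL K \<phi> (model p q (th' h)) - KL K \<phi> (model p q \<theta>)
        = (\<Sum>k=1..K. \<phi> k * ln (model p q \<theta> k) - \<phi> k * ln (model p q (th' h) k))"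
      unfolding KL_def sum_subtractf[symmetric]
    proof (rule sum.cong[OF refl])
      fix k assume k: "k \<in> {1..K}"
      show "(if \<phi> k = 0 then 0 else \<phi> k * ln (\<phi> k / model p q (th' h) k)) -
         (if \<phi> k = 0 then 0 else \<phi> k * ln (\<phi> k / model p q \<theta> k)) =
         \<phi> k * ln (model p q \<theta> k) - \<phi> k * ln (model p q (th' h) k)"
      proof (cases "\<phi> k = 0")
        case False
        then have "\<phi> k > 0" using phinn k by force
        moreover have "model p q (th' h) k > 0" "model p q \<theta> k > 0" using M'pos M0pos k by auto
        ultimately show ?thesis using False by (simp add: ln_div algebra_simps)
      qed simp
    qed
    also have "\<dots> = (\<Sum>k=1..K. (if k = i then \<phi> i * ln Mi - \<phi> i * ln (Mi - (p - q) * h) else 0)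
                              + (if k = j then \<phi> j * ln Mj - \<phi> j * ln (Mj + (p - q) * h) else 0))"
      by (rule sum.cong[OF refl]) (use ij in \<open>auto simp: th'_def model_def Mi_def Mj_def algebra_simps\<close>)
    also have "\<dots> = f 0 - f h" using i j by (simp add: sum.distrib f_def)
    finally show ?thesis using le by simp
  qed
  define l where "l = \<phi> i * (- (p - q) / Mi) + \<phi> j * ((p - q) / Mj)"
  have der: "DERIV f 0 :> l"
  proof -
    have "DERIV (\<lambda>h. \<phi> i * ln (Mi - (p - q) * h) + \<phi> j * ln (Mj + (p - q) * h)) 0 :>
       \<phi> i * (inverse (Mi - (p - q) * 0) * (0 - (p - q) * 1)) + \<phi> j * (inverse (Mj + (p - q) * 0) * (0 + (p - q) * 1))"
    proof (intro DERIV_add DERIV_cmult)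
      have g1: "DERIV (\<lambda>h. Mi - (p - q) * h) 0 :> (0 - (p - q) * 1)"
        by (intro derivative_intros DERIV_cmult DERIV_ident)
      show "DERIV (\<lambda>h. ln (Mi - (p - q) * h)) 0 :> inverse (Mi - (p - q) * 0) * (0 - (p - q) * 1)"
        using DERIV_chain2[OF DERIV_ln g1] Mi by simp
      have g2: "DERIV (\<lambda>h. Mj + (p - q) * h) 0 :> (0 + (p - q) * 1)"
        by (intro derivative_intros DERIV_cmult DERIV_ident)
      show "DERIV (\<lambda>h. ln (Mj + (p - q) * h)) 0 :> inverse (Mj + (p - q) * 0) * (0 + (p - q) * 1)"
        using DERIV_chain2[OF DERIV_ln g2] Mj by simp
    qed
    moreover have "\<phi> i * (inverse (Mi - (p - q) * 0) * (0 - (p - q) * 1)) + \<phi> j * (inverse (Mj + (p - q) * 0) * (0 + (p - q) * 1)) = l"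
      unfolding l_def by (simp add: divide_inverse)
    moreover have "f = (\<lambda>h. \<phi> i * ln (Mi - (p - q) * h) + \<phi> j * ln (Mj + (p - q) * h))"
      by (rule ext) (simp add: f_def)
    ultimately show ?thesis by simp
  qed
  have "l \<le> 0"
  proof (rule ccontr)
    assume "\<not> l \<le> 0"
    then obtain d where d: "d > 0" "\<forall>h>0. h < d \<longrightarrow> f 0 < f (0 + h)"
      using DERIV_pos_inc_right[OF der] by force
    have "f 0 < f (min (d/2) (\<theta> i))" using d ti by simp
    moreover have "f (min (d/2) (\<theta> i)) \<le> f 0" using key d ti by simp
    ultimately show False by simp
  qed
  moreover have "l = \<phi> j / Mj * (p - q) - \<phi> i / Mi * (p - q)" unfolding l_def by (simp add: divide_inverse algebra_simps)
  ultimately have "\<phi> j / Mj * (p - q) \<le> \<phi> i / Mi * (p - q)" by linarith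
  then have "\<phi> j / Mj \<le> \<phi> i / Mi" using pq mult_le_cancel_right[of "\<phi> j / Mj" "p - q" "\<phi> i / Mi"] by simp
  then show ?thesis unfolding Mi_def Mj_def .
qed

theorem lemma2:
  fixes K :: nat and p q :: real and \<phi> \<theta> :: "nat \<Rightarrow> real"
  assumes "K \<ge> 2" and "0 < q" and "q < p" and "p + (real K - 1) * q = 1"
    and "\<phi> \<in> simplex K"
    and "\<forall>i j. 1 \<le> i \<and> i \<le> j \<and> j \<le> K \<longrightarrow> \<phi> i \<le> \<phi> j"
    and "is_MLE K p q \<phi> \<theta>"
  shows "\<exists>n\<in>{0..K-1}. \<forall>i\<in>{1..K}. \<theta> i = theta_n K p q \<phi> n i"
proof -
  note K = assms(1) and q = assms(2) and pq = assms(3) and psum = assms(4)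
    and phi = assms(5) and sorted = assms(6) and mle = assms(7)
  have th: "\<theta> \<in> simplex K" using mle by (simp add: is_MLE_def)
  have phinn: "\<forall>k\<in>{1..K}. \<phi> k \<ge> 0" and phisum: "(\<Sum>k=1..K. \<phi> k) = 1"
    using phi by (auto simp add: simplex_def)
  have thnn: "\<forall>k\<in>{1..K}. \<theta> k \<ge> 0" and thsum: "(\<Sum>k=1..K. \<theta> k) = 1"
    using th by (auto simp add: simplex_def)
  define M where "M k = model p q \<theta> k" for k
  have Mdef: "M k = q + (p - q) * \<theta> k" for k unfolding M_def model_def by simp
  have Mpos: "M k > 0" if "k \<in> {1..K}" for k
    using that thnn q pq unfolding Mdef by (smt (verit) mult_nonneg_nonneg)
  obtain i0 where i0: "i0 \<in> {1..K}" "\<theta> i0 > 0"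
  proof (rule ccontr)
    assume "\<not> thesis"
    then have "\<forall>k\<in>{1..K}. \<theta> k = 0" using that thnn by force
    then have "(\<Sum>k=1..K. \<theta> k) = 0" by simp
    then show False using thsum by simp
  qed
  define c where "c = \<phi> i0 / M i0"
  have le: "\<phi> k / M k \<le> c" if "k \<in> {1..K}" for k
  proof (cases "k = i0")
    case False
    then show ?thesis using perturb[OF q pq phi mle i0(1) that _ i0(2)] unfolding c_def M_def by simp
  qed (simp add: c_def)
  have eq: "\<phi> k / M k = c" if "k \<in> {1..K}" "\<theta> k > 0" for k
  proof (cases "k = i0")
    case False
    then have "c \<le> \<phi> k / M k" using perturb[OF q pq phi mle that(1) i0(1) _ that(2)] unfolding c_def M_def by simp
    then show ?thesis using le[OF that(1)] by simp
  qed (simp add: c_def)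
  have cpos: "c > 0"
  proof (rule ccontr)
    assume "\<not> c > 0"
    then have "\<forall>k\<in>{1..K}. \<phi> k = 0"
    proof (intro ballI)
      fix k assume k: "k \<in> {1..K}"
      have "\<phi> k / M k \<le> 0" using le[OF k] \<open>\<not> c > 0\<close> by simp
      then have "\<phi> k \<le> 0" using Mpos[OF k] by (simp add: divide_le_0_iff)
      then show "\<phi> k = 0" using phinn k by force
    qed
    then have "(\<Sum>k=1..K. \<phi> k) = 0" by simp
    then show False using phisum by simp
  qed
  have posfor: "\<phi> k = c * q + c * (p - q) * \<theta> k" if "k \<in> {1..K}" "\<theta> k > 0" for k
  proof -
    have "\<phi> k = c * M k" using eq[OF that] Mpos[OF that(1)] by (simp add: field_simps)
    then show ?thesis unfolding Mdef by (simp add: algebra_simps)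
  qed
  have pos_iff: "\<theta> k > 0 \<longleftrightarrow> \<phi> k > c * q" if k: "k \<in> {1..K}" for k
  proof
    assume "\<theta> k > 0"
    then show "\<phi> k > c * q" using posfor[OF k] cpos pq by (simp add: mult_pos_pos)
  next
    assume a: "\<phi> k > c * q"
    show "\<theta> k > 0"
    proof (rule ccontr)
      assume "\<not> \<theta> k > 0"
      then have "\<theta> k = 0" using thnn k by force
      then have "M k = q" unfolding Mdef by simp
      then have "\<phi> k / q \<le> c" using le[OF k] by simp
      then have "\<phi> k \<le> c * q" using q by (simp add: divide_le_eq)
      then show False using a by simp
    qed
  qed
  define S where "S = {k\<in>{1..K}. \<phi> k \<le> c * q}"
  define n where "n = (if S = {} then 0 else Max S)"
  have finS: "finite S" unfolding S_def by simp
  have nK: "n \<le> K"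
  proof (cases "S = {}")
    case False
    then have "Max S \<in> S" using finS by simp
    then show ?thesis unfolding n_def S_def using False by auto
  qed (simp add: n_def)
  have S_iff: "\<phi> k \<le> c * q \<longleftrightarrow> k \<le> n" if k: "k \<in> {1..K}" for k
  proof (cases "S = {}")
    case True
    then show ?thesis using k unfolding n_def S_def by auto
  next
    case False
    have MS: "Max S \<in> S" using finS False by simp
    show ?thesis
    proof
      assume "\<phi> k \<le> c * q"
      then have "k \<in> S" using k unfolding S_def by simp
      then show "k \<le> n" using finS False unfolding n_def by simp
    next
      assume "k \<le> n"
      then have "k \<le> Max S" using False unfolding n_def by simp
      moreover have "Max S \<le> K" "\<phi> (Max S) \<le> c * q" using MS unfolding S_def by auto
      ultimately have "\<phi> k \<le> \<phi> (Max S)" using sorted k by auto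
      then show "\<phi> k \<le> c * q" using \<open>\<phi> (Max S) \<le> c * q\<close> by simp
    qed
  qed
  have nlt: "n < K"
  proof (rule ccontr)
    assume "\<not> n < K"
    then have "i0 \<le> n" using i0(1) by simp
    then have "\<phi> i0 \<le> c * q" using S_iff[OF i0(1)] by simp
    then show False using pos_iff[OF i0(1)] i0(2) by simp
  qed
  define \<mu> where "\<mu> = c * (p - q)"
  have mupos: "\<mu> > 0" unfolding \<mu>_def using cpos pq by simp
  have zero: "\<theta> k = 0" if "k \<in> {1..K}" "k \<le> n" for k
  proof -
    have "\<not> \<theta> k > 0" using S_iff[OF that(1)] pos_iff[OF that(1)] that(2) by simp
    then show ?thesis using thnn that(1) by force
  qed
  have form: "\<theta> k = \<phi> k / \<mu> - q / (p - q)" if "k \<in> {1..K}" "n < k" for k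
  proof -
    have "\<theta> k > 0" using S_iff[OF that(1)] pos_iff[OF that(1)] that(2) by simp
    then have "\<phi> k = c * q + c * (p - q) * \<theta> k" using posfor that(1) by simp
    then have "\<phi> k - c * q = \<mu> * \<theta> k" unfolding \<mu>_def by simp
    then have "\<theta> k = (\<phi> k - c * q) / \<mu>" using mupos by simp
    also have "\<dots> = \<phi> k / \<mu> - c * q / \<mu>" by (simp add: diff_divide_distrib)
    also have "c * q / \<mu> = q / (p - q)" unfolding \<mu>_def using cpos by simp
    finally show ?thesis .
  qed
  define Sn where "Sn = (\<Sum>k\<in>{n<..K}. \<phi> k)"
  have sub: "{n<..K} \<subseteq> {1..K}" by auto
  have "(\<Sum>k=1..K. \<theta> k) = (\<Sum>k\<in>{n<..K}. \<theta> k)"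
    by (rule sum.mono_neutral_right) (use sub zero in auto)
  then have "1 = (\<Sum>k\<in>{n<..K}. \<theta> k)" using thsum by simp
  also have "\<dots> = (\<Sum>k\<in>{n<..K}. \<phi> k / \<mu> - q / (p - q))"
    by (rule sum.cong[OF refl]) (use form sub in auto)
  also have "\<dots> = Sn / \<mu> - real (K - n) * (q / (p - q))"
    unfolding Sn_def by (simp add: sum_subtractf sum_divide_distrib)
  finally have s1: "1 = Sn / \<mu> - real (K - n) * (q / (p - q))" .
  have rK: "real (K - n) = real K - real n" using nK by simp
  have s2: "\<mu> * (p - q) = Sn * (p - q) - (real K - real n) * q * \<mu>"
    using s1 mupos pq unfolding rK by (simp add: field_simps)
  have nq: "real n * q < 1"
  proof -
    have "real n \<le> real K - 1" using nlt by linarith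
    then have "real n * q \<le> (real K - 1) * q" using q by (simp add: mult_right_mono)
    then show ?thesis using psum pq q by linarith
  qed
  have "\<mu> * (1 - real n * q) = (p - q) * Sn"
  proof -
    have "p - q + (real K - real n) * q = 1 - real n * q" using psum by (simp add: algebra_simps)
    moreover have "\<mu> * (p - q + (real K - real n) * q) = (p - q) * Sn" using s2 by (simp add: algebra_simps)
    ultimately show ?thesis by simp
  qed
  then have mulam: "\<mu> = lam K p q \<phi> n" unfolding lam_def Sn_def[symmetric] using nq
    by (simp add: field_simps)
  show ?thesis
  proof (rule bexI[of _ n])
    show "n \<in> {0..K-1}" using nlt by simp
    show "\<forall>i\<in>{1..K}. \<theta> i = theta_n K p q \<phi> n i"
    proof
      fix i assume i: "i \<in> {1..K}"
      show "\<theta> i = theta_n K p q \<phi> n i"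
      proof (cases "i \<le> n")
        case True
        then show ?thesis using zero[OF i] unfolding theta_n_def by simp
      next
        case False
        then show ?thesis using form[OF i] mulam unfolding theta_n_def by simp
      qed
    qed
  qed
qed

end
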